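(* Let $G$ be a non-chordal graph, $H$ a hole of $G$, and $S$ the equivalence class of $\sim_G$ containing $V(H)$. Let $u,v$ be two nonadjacent vertices of $H$. If $G+uv$ has a hole $H^*$ that is not a hole of $G$, then $V(H^* )\subseteq S$.
   Context: All graphs are finite and simple. A hole of $G$ is an induced cycle of length at least $4$; $G$ is chordal if it has no hole. $\mathcal H(G)$ is the set of holes of $G$ and $\Omega(G)=\bigcup_{H\in\mathcal H(G)}V(H)$. The relation $\sim_G$ on $\Omega(G)$ is defined by $x\sim_G y$ iff $x,y$ lie on a common hole, or there is a sequence $H_1,\dots,H_t$ of distinct holes of $G$ with $x\in V(H_1)$, $y\in V(H_t)$ and $H_i,H_{i+1}$ sharing a vertex for each $i$; it is an equivalence relation and the vertex set of each hole lies in a single class. *)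

theory Defs
  imports Main
begin

definition graph :: "'a set \<Rightarrow> ('a \<Rightarrow> 'a \<Rightarrow> bool) \<Rightarrow> bool" where
  "graph V E \<longleftrightarrow> finite V \<and> (\<forall>x y. E x y \<longrightarrow> x \<in> V \<and> y \<in> V)
     \<and> (\<forall>x y. E x y \<longrightarrow> E y x) \<and> (\<forall>x. \<not> E x x)"

text \<open>A hole (induced cycle of length at least 4), represented by its vertex set
(an induced subgraph is determined by its vertex set): C is a hole iff its
vertices can be listed cyclically as xs (distinct, length at least 4) such that
two vertices of C are adjacent exactly when they are cyclically consecutive.\<close>
definition is_hole :: "'a set \<Rightarrow> ('a \<Rightarrow> 'a \<Rightarrow> bool) \<Rightarrow> 'a set \<Rightarrow> bool" where
  "is_hole V E C \<longleftrightarrow> C \<subseteq> V \<and> (\<exists>xs. distinct xs \<and> set xs = C \<and> length xs \<ge> 4 \<and>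
     (\<forall>i<length xs. \<forall>j<length xs.
        E (xs ! i) (xs ! j) \<longleftrightarrow> (j = Suc i mod length xs \<or> i = Suc j mod length xs)))"

definition holes :: "'a set \<Rightarrow> ('a \<Rightarrow> 'a \<Rightarrow> bool) \<Rightarrow> 'a set set" where
  "holes V E = {C. is_hole V E C}"

definition chordal :: "'a set \<Rightarrow> ('a \<Rightarrow> 'a \<Rightarrow> bool) \<Rightarrow> bool" where
  "chordal V E \<longleftrightarrow> holes V E = {}"

definition Omega :: "'a set \<Rightarrow> ('a \<Rightarrow> 'a \<Rightarrow> bool) \<Rightarrow> 'a set" where
  "Omega V E = \<Union> (holes V E)"

text \<open>x ~_G y: x,y lie on a common hole (list of length 1), or there is a sequence
of distinct holes H_1..H_t with x in H_1, y in H_t and consecutive holes sharing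
a vertex.\<close>
definition hole_rel :: "'a set \<Rightarrow> ('a \<Rightarrow> 'a \<Rightarrow> bool) \<Rightarrow> 'a \<Rightarrow> 'a \<Rightarrow> bool" where
  "hole_rel V E x y \<longleftrightarrow> (\<exists>Hs. Hs \<noteq> [] \<and> distinct Hs \<and> set Hs \<subseteq> holes V E \<and>
     x \<in> hd Hs \<and> y \<in> last Hs \<and>
     (\<forall>i. Suc i < length Hs \<longrightarrow> Hs ! i \<inter> Hs ! Suc i \<noteq> {}))"

definition hole_class :: "'a set \<Rightarrow> ('a \<Rightarrow> 'a \<Rightarrow> bool) \<Rightarrow> 'a set \<Rightarrow> 'a set" where
  "hole_class V E H = {y. \<exists>x\<in>H. hole_rel V E x y}"

definition add_edge :: "('a \<Rightarrow> 'a \<Rightarrow> bool) \<Rightarrow> 'a \<Rightarrow> 'a \<Rightarrow> 'a \<Rightarrow> 'a \<Rightarrow> bool" where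
  "add_edge E u v = (\<lambda>x y. E x y \<or> (x = u \<and> y = v) \<or> (x = v \<and> y = u))"

end

theory Submission
  imports Defs
begin

definition cadj :: "nat \<Rightarrow> nat \<Rightarrow> nat \<Rightarrow> bool" where
  "cadj n i j \<longleftrightarrow> j = Suc i mod n \<or> i = Suc j mod n"

definition cyc :: "('a \<Rightarrow> 'a \<Rightarrow> bool) \<Rightarrow> 'a list \<Rightarrow> bool" where
  "cyc E xs \<longleftrightarrow> distinct xs \<and> 4 \<le> length xs \<and>
     (\<forall>i<length xs. \<forall>j<length xs. E (xs!i) (xs!j) \<longleftrightarrow> cadj (length xs) i j)"

lemma is_hole_cyc: "is_hole V E C \<longleftrightarrow> C \<subseteq> V \<and> (\<exists>xs. cyc E xs \<and> set xs = C)"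
  unfolding is_hole_def cyc_def cadj_def by auto

lemma cadj_shift:
  assumes "i < n" "j < n"
  shows "cadj n ((k + i) mod n) ((k + j) mod n) \<longleftrightarrow> cadj n i j"
proof -
  have n: "0 < n" using assms by auto
  have e: "\<And>a b. a < n \<Longrightarrow> b < n \<Longrightarrow> ((k + b) mod n = Suc ((k + a) mod n) mod n) \<longleftrightarrow> b = Suc a mod n"
  proof -
    fix a b assume a: "a < n" and b: "b < n"
    have "Suc ((k + a) mod n) mod n = (k + Suc a) mod n" by (simp add: mod_Suc_eq)
    hence "((k + b) mod n = Suc ((k + a) mod n) mod n) \<longleftrightarrow> (k + b) mod n = (k + Suc a) mod n" by simp
    also have "\<dots> \<longleftrightarrow> b mod n = Suc a mod n" by (simp add: nat_mod_eq_iff)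
    also have "\<dots> \<longleftrightarrow> b = Suc a mod n" using b by simp
    finally show "((k + b) mod n = Suc ((k + a) mod n) mod n) \<longleftrightarrow> b = Suc a mod n" .
  qed
  show ?thesis unfolding cadj_def using e[OF assms(1,2)] e[OF assms(2,1)] by blast
qed

lemma cyc_rotate: "cyc E xs \<Longrightarrow> cyc E (rotate k xs)"
  unfolding cyc_def
  apply (auto simp: nth_rotate)
  using cadj_shift by (metis mod_less_divisor neq0_conv not_less0)+

lemma cyc_cong: "(\<And>a b. a \<in> set xs \<Longrightarrow> b \<in> set xs \<Longrightarrow> E a b = F a b) \<Longrightarrow> cyc E xs = cyc F xs"
  unfolding cyc_def by (auto simp: nth_mem)

definition walk :: "('a \<Rightarrow> 'a \<Rightarrow> bool) \<Rightarrow> 'a list \<Rightarrow> bool" where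
  "walk E ys \<longleftrightarrow> (\<forall>j. Suc j < length ys \<longrightarrow> E (ys!j) (ys!Suc j))"

definition ipath :: "('a \<Rightarrow> 'a \<Rightarrow> bool) \<Rightarrow> 'a list \<Rightarrow> bool" where
  "ipath E ys \<longleftrightarrow> distinct ys \<and>
     (\<forall>i<length ys. \<forall>j<length ys. E (ys!i) (ys!j) \<longleftrightarrow> (j = Suc i \<or> i = Suc j))"

definition rel :: "'a set \<Rightarrow> ('a \<Rightarrow> 'a \<Rightarrow> bool) \<Rightarrow> 'a \<Rightarrow> 'a \<Rightarrow> bool" where
  "rel W E a b \<longleftrightarrow> E a b \<and> a \<in> W \<and> b \<in> W"

lemma reach_walk:
  assumes "(rel W E)\<^sup>*\<^sup>* p q" "p \<in> W"
  shows "\<exists>ys. ys \<noteq> [] \<and> hd ys = p \<and> last ys = q \<and> set ys \<subseteq> W \<and> walk E ys"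
  using assms
proof (induction rule: rtranclp_induct)
  case base
  then show ?case by (auto simp: walk_def)
next
  case (step y z)
  then obtain ys where ys: "ys \<noteq> []" "hd ys = p" "last ys = y" "set ys \<subseteq> W" "walk E ys" by blast
  have "walk E (ys @ [z])"
    unfolding walk_def
  proof (intro allI impI)
    fix j assume j: "Suc j < length (ys @ [z])"
    show "E ((ys @ [z]) ! j) ((ys @ [z]) ! Suc j)"
    proof (cases "Suc j < length ys")
      case True then show ?thesis using ys(5) by (simp add: nth_append walk_def)
    next
      case False
      hence "j = length ys - 1" using j by simp
      then show ?thesis using step(2) ys by (simp add: nth_append rel_def last_conv_nth)
    qed
  qed
  moreover have "ys @ [z] \<noteq> []" "hd (ys @ [z]) = p" "last (ys @ [z]) = z" "set (ys @ [z]) \<subseteq> W"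
    using ys step(2) by (auto simp: rel_def)
  ultimately show ?case by blast
qed

lemma walk_shortcut:
  assumes "walk E ys" "a \<le> j" "j < length ys" "a = 0 \<or> E (ys!(a-1)) (ys!j)"
  shows "walk E (take a ys @ drop j ys)"
  unfolding walk_def
proof (intro allI impI)
  fix t assume t: "Suc t < length (take a ys @ drop j ys)"
  have al: "length (take a ys) = a" using assms by simp
  show "E ((take a ys @ drop j ys) ! t) ((take a ys @ drop j ys) ! Suc t)"
  proof (cases "Suc t < a")
    case True then show ?thesis using assms(1) al by (simp add: nth_append walk_def)
  next
    case False
    show ?thesis
    proof (cases "Suc t = a")
      case True
      hence "t = a - 1" by simp
      have "0 < a" using True by simp
      have e: "E (ys!t) (ys!j)" using assms(4) \<open>t = a - 1\<close> \<open>0 < a\<close> by auto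
      have "(take a ys @ drop j ys) ! t = ys ! t" using \<open>t = a - 1\<close> \<open>0 < a\<close> al by (simp add: nth_append)
      moreover have "(take a ys @ drop j ys) ! Suc t = ys ! j" using True al assms(3) by (simp add: nth_append)
      ultimately show ?thesis using e by simp
    next
      case False2: False
      hence "a \<le> t" using False by simp
      have l: "length (take a ys @ drop j ys) = a + (length ys - j)" using assms by simp
      have i1: "(take a ys @ drop j ys) ! t = ys ! (j + (t - a))"
        using \<open>a \<le> t\<close> al t l assms(3) by (simp add: nth_append)
      have i2: "(take a ys @ drop j ys) ! Suc t = ys ! Suc (j + (t - a))"
        using \<open>a \<le> t\<close> al t l assms(3) by (simp add: nth_append Suc_diff_le)
      have "Suc (j + (t - a)) < length ys" using t l \<open>a \<le> t\<close> by linarith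
      then show ?thesis using assms(1) i1 i2 unfolding walk_def by simp
    qed
  qed
qed

lemma shortcut_props:
  assumes "a \<le> j" "j < length ys" "0 < a \<or> ys ! j = hd ys"
  shows "take a ys @ drop j ys \<noteq> []" "hd (take a ys @ drop j ys) = hd ys"
    "last (take a ys @ drop j ys) = last ys" "set (take a ys @ drop j ys) \<subseteq> set ys"
    "length (take a ys @ drop j ys) = a + (length ys - j)"
proof -
  show "take a ys @ drop j ys \<noteq> []" using assms by simp
  show "hd (take a ys @ drop j ys) = hd ys"
  proof (cases "a = 0")
    case True then show ?thesis using assms by (simp add: hd_drop_conv_nth)
  next
    case False
    hence "take a ys \<noteq> []" using assms by (metis gr_implies_not0 list.size(3) take_eq_Nil)
    then show ?thesis by (simp add: hd_take)
  qed
  show "last (take a ys @ drop j ys) = last ys" using assms by simp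
  show "set (take a ys @ drop j ys) \<subseteq> set ys" using set_drop_subset set_take_subset by (metis Un_least set_append)
  show "length (take a ys @ drop j ys) = a + (length ys - j)" using assms by simp
qed

lemma walk_ipath:
  assumes sym: "\<And>x y. E x y \<Longrightarrow> E y x" and irr: "\<And>x. \<not> E x x"
  shows "walk E ys \<Longrightarrow> ys \<noteq> [] \<Longrightarrow> \<exists>zs. ipath E zs \<and> zs \<noteq> [] \<and> hd zs = hd ys \<and> last zs = last ys \<and> set zs \<subseteq> set ys"
proof (induction "length ys" arbitrary: ys rule: less_induct)
  case less
  show ?case
  proof (cases "ipath E ys")
    case True then show ?thesis using less.prems by blast
  next
    case False
    have "\<exists>i j. i < j \<and> j < length ys \<and> (ys!i = ys!j \<or> (E (ys!i) (ys!j) \<and> Suc i < j))"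
    proof (cases "distinct ys")
      case False
      then obtain i j where "i < length ys" "j < length ys" "i \<noteq> j" "ys!i = ys!j"
        by (auto simp: distinct_conv_nth)
      then show ?thesis by (metis linorder_neqE_nat)
    next
      case True
      with False obtain i j where ij: "i < length ys" "j < length ys"
        "\<not> (E (ys!i) (ys!j) \<longleftrightarrow> (j = Suc i \<or> i = Suc j))"
        unfolding ipath_def by blast
      show ?thesis
      proof (cases "E (ys!i) (ys!j)")
        case True
        hence "i \<noteq> j" using irr by auto
        then show ?thesis using True ij sym by (metis Suc_lessI linorder_neqE_nat)
      next
        case False
        hence "j = Suc i \<or> i = Suc j" using ij by blast
        then show ?thesis using False less.prems(1) ij sym unfolding walk_def by metis
      qed
    qed
    then obtain i j where ij: "i < j" "j < length ys" "ys!i = ys!j \<or> (E (ys!i) (ys!j) \<and> Suc i < j)"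
      by blast
    obtain a where a: "a \<le> j" "a < j" "0 < a \<or> ys ! j = hd ys" "a = 0 \<or> E (ys!(a-1)) (ys!j)"
    proof (cases "ys!i = ys!j")
      case True
      have "i = 0 \<or> E (ys!(i-1)) (ys!j)"
        using less.prems(1) True ij unfolding walk_def by (metis Suc_pred' less_trans neq0_conv)
      moreover have "0 < i \<or> ys!j = hd ys" using True less.prems(2) by (metis hd_conv_nth neq0_conv)
      ultimately show ?thesis using that ij by auto
    next
      case False
      then show ?thesis using that[of "Suc i"] ij by auto
    qed
    let ?zs = "take a ys @ drop j ys"
    have w: "walk E ?zs" using walk_shortcut[OF less.prems(1) a(1) ij(2) a(4)] .
    note sp = shortcut_props[OF a(1) ij(2) a(3)]
    have "length ?zs < length ys" using sp(5) a(2) ij(2) by linarith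
    from less.hyps[OF this w sp(1)] sp show ?thesis by auto
  qed
qed

lemma apex_cyc:
  assumes sym: "\<And>x y. E x y \<Longrightarrow> E y x" and irr: "\<And>x. \<not> E x x"
    and ip: "ipath E ys" and l: "3 \<le> length ys" and x: "x \<notin> set ys"
    and h: "E x (ys!0)" and t: "E x (ys!(length ys - 1))"
    and mid: "\<And>j. 0 < j \<Longrightarrow> j < length ys - 1 \<Longrightarrow> \<not> E x (ys!j)"
  shows "cyc E (x # ys)"
proof -
  let ?n = "length ys"
  have ne: "ys \<noteq> []" using l by (cases ys) auto
  have dis: "distinct (x # ys)" using ip x by (simp add: ipath_def)
  have adj: "E ((x#ys)!i) ((x#ys)!j) \<longleftrightarrow> cadj (Suc ?n) i j" if "i < Suc ?n" "j < Suc ?n" for i j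
  proof (cases "i = 0")
    case True
    show ?thesis
    proof (cases "j = 0")
      case True
      have "Suc 0 mod Suc ?n = Suc 0" using ne by simp
      then show ?thesis using \<open>i = 0\<close> True irr unfolding cadj_def by simp
    next
      case False
      then obtain j' where j': "j = Suc j'" by (cases j) auto
      have "j' < ?n" using that j' by simp
      have "E x (ys!j') \<longleftrightarrow> j' = 0 \<or> j' = ?n - 1"
        using mid[of j'] h t \<open>j' < ?n\<close> by (cases "j' = 0"; cases "j' = ?n - 1") auto
      moreover have "cadj (Suc ?n) 0 j \<longleftrightarrow> j' = 0 \<or> j' = ?n - 1"
        using j' that l unfolding cadj_def by (auto simp: mod_Suc)
      ultimately show ?thesis using \<open>i = 0\<close> j' by simp
    qed
  next
    case False
    then obtain i' where i': "i = Suc i'" by (cases i) auto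
    show ?thesis
    proof (cases "j = 0")
      case True
      have "i' < ?n" using that i' by simp
      have "E x (ys!i') \<longleftrightarrow> i' = 0 \<or> i' = ?n - 1"
        using mid[of i'] h t \<open>i' < ?n\<close> by (cases "i' = 0"; cases "i' = ?n - 1") auto
      hence "E (ys!i') x \<longleftrightarrow> i' = 0 \<or> i' = ?n - 1" using sym by blast
      moreover have "cadj (Suc ?n) i 0 \<longleftrightarrow> i' = 0 \<or> i' = ?n - 1"
        using i' that l unfolding cadj_def by (auto simp: mod_Suc)
      ultimately show ?thesis using True i' by simp
    next
      case False
      then obtain j' where j': "j = Suc j'" by (cases j) auto
      have "E (ys!i') (ys!j') \<longleftrightarrow> (j' = Suc i' \<or> i' = Suc j')"
        using ip that i' j' unfolding ipath_def by simp
      moreover have "cadj (Suc ?n) i j \<longleftrightarrow> (j' = Suc i' \<or> i' = Suc j')"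
        using i' j' that unfolding cadj_def by (auto simp: mod_Suc)
      ultimately show ?thesis using i' j' by simp
    qed
  qed
  show ?thesis unfolding cyc_def using dis l adj by simp
qed

lemma graph_sym: "graph V E \<Longrightarrow> E x y \<Longrightarrow> E y x" unfolding graph_def by blast
lemma graph_irr: "graph V E \<Longrightarrow> \<not> E x x" unfolding graph_def by blast
lemma graph_V: "graph V E \<Longrightarrow> E x y \<Longrightarrow> x \<in> V \<and> y \<in> V" unfolding graph_def by blast

lemma apex_hole:
  assumes g: "graph V E" and x: "x \<in> V" "x \<notin> W" and WV: "W \<subseteq> V"
    and pq: "p \<in> W" "q \<in> W" "p \<noteq> q" "\<not> E p q" "E x p" "E x q"
    and onlypq: "\<And>w. w \<in> W \<Longrightarrow> E x w \<Longrightarrow> w = p \<or> w = q"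
    and r: "(rel W E)\<^sup>*\<^sup>* p q"
  shows "\<exists>ys. ipath E ys \<and> ys \<noteq> [] \<and> hd ys = p \<and> last ys = q \<and> set ys \<subseteq> W \<and>
              is_hole V E (insert x (set ys))"
proof -
  have sym: "\<And>a b. E a b \<Longrightarrow> E b a" using graph_sym[OF g] .
  have irr: "\<And>a. \<not> E a a" using graph_irr[OF g] .
  obtain ws where ws: "ws \<noteq> []" "hd ws = p" "last ws = q" "set ws \<subseteq> W" "walk E ws"
    using reach_walk[OF r pq(1)] by blast
  obtain ys where ys: "ipath E ys" "ys \<noteq> []" "hd ys = p" "last ys = q" "set ys \<subseteq> W"
    using walk_ipath[OF sym irr ws(5) ws(1)] ws by blast
  have h0: "ys!0 = p" using ys by (simp add: hd_conv_nth)
  have hl: "ys!(length ys - 1) = q" using ys by (simp add: last_conv_nth)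
  have l: "3 \<le> length ys"
  proof (rule ccontr)
    assume "\<not> 3 \<le> length ys"
    moreover have "length ys \<noteq> 0" using ys(2) by simp
    ultimately have "length ys = 1 \<or> length ys = 2" by linarith
    then show False
    proof
      assume "length ys = 1" then show False using h0 hl pq(3) by simp
    next
      assume "length ys = 2"
      hence "E (ys!0) (ys!1)" using ys(1) unfolding ipath_def by auto
      then show False using h0 hl pq(4) \<open>length ys = 2\<close> by simp
    qed
  qed
  have xn: "x \<notin> set ys" using x ys(5) by blast
  have mid: "\<not> E x (ys!j)" if "0 < j" "j < length ys - 1" for j
  proof
    assume "E x (ys!j)"
    moreover have "ys!j \<in> W" using ys(5) that by (meson diff_le_self le_trans less_imp_le_nat not_le nth_mem subsetD)
    ultimately have "ys!j = p \<or> ys!j = q" using onlypq by blast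
    hence "ys!j = ys!0 \<or> ys!j = ys!(length ys - 1)" using h0 hl by simp
    moreover have "distinct ys" using ys(1) ipath_def by blast
    moreover have "j < length ys" "0 < length ys" "length ys - 1 < length ys" using that by auto
    ultimately show False using that nth_eq_iff_index_eq by (metis less_irrefl)
  qed
  have c: "cyc E (x # ys)"
    using apex_cyc[OF sym irr ys(1) l xn] h0 hl pq(5,6) mid by simp
  have "insert x (set ys) \<subseteq> V" using x WV ys(5) by blast
  hence "is_hole V E (insert x (set ys))" using c unfolding is_hole_cyc by (metis list.simps(15))
  then show ?thesis using ys by blast
qed

lemma len_ne: "(m::nat) < length xs \<Longrightarrow> xs \<noteq> []" by auto

lemma reach_idx:
  assumes "walk E ys" "b < length ys" "a \<le> b" "\<And>j. a \<le> j \<Longrightarrow> j \<le> b \<Longrightarrow> ys!j \<in> W"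
  shows "(rel W E)\<^sup>*\<^sup>* (ys!a) (ys!b)"
  using assms(2-4)
proof (induction b)
  case 0 then show ?case by simp
next
  case (Suc b)
  show ?case
  proof (cases "a = Suc b")
    case True then show ?thesis by simp
  next
    case False
    hence ab: "a \<le> b" using Suc.prems by simp
    have r: "(rel W E)\<^sup>*\<^sup>* (ys!a) (ys!b)" using Suc ab by simp
    have "rel W E (ys!b) (ys!Suc b)" using assms(1) Suc.prems ab unfolding walk_def rel_def by simp
    then show ?thesis using r by (meson rtranclp.rtrancl_into_rtrancl)
  qed
qed

lemma reach_sym:
  assumes sym: "\<And>a b. E a b \<Longrightarrow> E b a" and r: "(rel W E)\<^sup>*\<^sup>* a b"
  shows "(rel W E)\<^sup>*\<^sup>* b a"
  using r
proof (induction rule: rtranclp_induct)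
  case base then show ?case by simp
next
  case (step y z)
  have "rel W E z y" using step(2) sym unfolding rel_def by blast
  then show ?case using step(3) by (rule converse_rtranclp_into_rtranclp)
qed

lemma reach_mono: "(rel W E)\<^sup>*\<^sup>* a b \<Longrightarrow> W \<subseteq> W' \<Longrightarrow> (rel W' E)\<^sup>*\<^sup>* a b"
  by (erule rtranclp_mono[THEN predicate2D, rotated]) (auto simp: rel_def)

lemma cyc_walk: "cyc E hs \<Longrightarrow> walk E hs"
  unfolding cyc_def walk_def cadj_def by auto

lemma cyc_wrap: assumes "cyc E hs" shows "E (hs!(length hs - 1)) (hs!0)"
proof -
  have l: "4 \<le> length hs" using assms cyc_def by blast
  have "Suc (length hs - 1) = length hs" using l by linarith
  hence "cadj (length hs) (length hs - 1) 0" unfolding cadj_def by simp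
  moreover have "length hs - 1 < length hs" "0 < length hs" using l by auto
  ultimately show ?thesis using assms unfolding cyc_def by blast
qed

lemma cyc_adj: "cyc E hs \<Longrightarrow> i < length hs \<Longrightarrow> j < length hs \<Longrightarrow> E (hs!i) (hs!j) \<longleftrightarrow> cadj (length hs) i j"
  unfolding cyc_def by blast

lemma rotate_to:
  assumes "cyc E hs" "c \<in> set hs"
  shows "\<exists>hs'. cyc E hs' \<and> set hs' = set hs \<and> hs'!0 = c \<and> length hs' = length hs"
proof -
  obtain g where g: "g < length hs" "hs!g = c" using assms(2) by (meson in_set_conv_nth)
  have "0 < length hs" using g by linarith
  hence "rotate g hs ! 0 = hs ! ((g + 0) mod length hs)" by (rule nth_rotate)
  hence "rotate g hs ! 0 = c" using g by simp
  moreover have "cyc E (rotate g hs)" using cyc_rotate[OF assms(1)] .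
  moreover have "set (rotate g hs) = set hs" "length (rotate g hs) = length hs" by simp_all
  ultimately show ?thesis by blast
qed

lemma caseI:
  assumes g: "graph V E" and c0: "cyc E hs0" and hV: "set hs0 \<subseteq> V" and x: "x \<in> V" "x \<notin> set hs0"
    and yz: "y \<in> set hs0" "z \<in> set hs0" "E x y" "E x z" "y \<noteq> z" "\<not> E y z"
    and c: "c \<in> set hs0" "\<not> E x c"
  shows "\<exists>C. is_hole V E C \<and> x \<in> C \<and> C \<inter> set hs0 \<noteq> {}"
proof -
  obtain hs where hs: "cyc E hs" "set hs = set hs0" "hs!0 = c" "length hs = length hs0"
    using rotate_to[OF c0 c(1)] by blast
  define n where "n = length hs"
  have n4: "4 \<le> n" using hs(1) n_def cyc_def by blast
  have dis: "distinct hs" using hs(1) cyc_def by blast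
  define J where "J = {j. j < n \<and> E x (hs!j)}"
  have finJ: "finite J" unfolding J_def by simp
  obtain jy where jy: "jy < n" "hs!jy = y" using yz(1) hs(2) n_def by (metis in_set_conv_nth)
  obtain jz where jz: "jz < n" "hs!jz = z" using yz(2) hs(2) n_def by (metis in_set_conv_nth)
  have jyJ: "jy \<in> J" and jzJ: "jz \<in> J" using jy jz yz J_def by auto
  have jyz: "jy \<noteq> jz" using jy jz yz(5) by auto
  define \<alpha> where "\<alpha> = Min J"
  define \<beta> where "\<beta> = Max J"
  have aJ: "\<alpha> \<in> J" and bJ: "\<beta> \<in> J" using finJ jyJ \<alpha>_def \<beta>_def by (auto intro: Min_in Max_in)
  have aleq: "\<And>j. j \<in> J \<Longrightarrow> \<alpha> \<le> j \<and> j \<le> \<beta>" using finJ \<alpha>_def \<beta>_def by auto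
  have b_lt: "\<beta> < n" using bJ J_def by simp
  have a_pos: "0 < \<alpha>"
  proof (rule ccontr)
    assume "\<not> 0 < \<alpha>" hence "\<alpha> = 0" by simp
    thus False using aJ J_def hs(3) c(2) by simp
  qed
  have ab: "\<alpha> < \<beta>" using aleq[OF jyJ] aleq[OF jzJ] jyz by linarith
  have ab1: "\<beta> \<noteq> Suc \<alpha>"
  proof
    assume b: "\<beta> = Suc \<alpha>"
    hence "jy \<in> {\<alpha>, Suc \<alpha>}" "jz \<in> {\<alpha>, Suc \<alpha>}" using aleq[OF jyJ] aleq[OF jzJ] by auto
    hence "(jy = \<alpha> \<and> jz = Suc \<alpha>) \<or> (jz = \<alpha> \<and> jy = Suc \<alpha>)" using jyz by auto
    moreover have "Suc \<alpha> < n" using b b_lt by simp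
    ultimately have "cadj n jy jz" unfolding cadj_def by auto
    hence "E y z" using cyc_adj[OF hs(1)] jy jz n_def by metis
    thus False using yz(6) by simp
  qed
  define p where "p = hs!\<beta>"
  define q where "q = hs!\<alpha>"
  have a_lt: "\<alpha> < n" using ab b_lt by simp
  have pq: "p \<noteq> q" using dis ab a_lt b_lt p_def q_def n_def by (simp add: nth_eq_iff_index_eq)
  have npq: "\<not> E p q"
  proof
    assume "E p q"
    hence "cadj n \<beta> \<alpha>" using cyc_adj[OF hs(1)] a_lt b_lt p_def q_def n_def by metis
    moreover have "Suc \<alpha> mod n = Suc \<alpha>" using ab b_lt by simp
    moreover have "Suc \<beta> mod n \<noteq> \<alpha>"
    proof (cases "Suc \<beta> < n")
      case True then show ?thesis using ab by simp
    next
      case False hence "Suc \<beta> = n" using b_lt by simp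
      then show ?thesis using a_pos by simp
    qed
    ultimately show False using ab1 unfolding cadj_def by auto
  qed
  define W where "W = {hs!j | j. j < n \<and> (j \<le> \<alpha> \<or> \<beta> \<le> j)}"
  have WV: "W \<subseteq> V" using hV hs(2) n_def W_def by (auto intro: nth_mem)
  have xW: "x \<notin> W" using x(2) hs(2) n_def W_def by (auto intro: nth_mem)
  have pW: "p \<in> W" and qW: "q \<in> W" using p_def q_def W_def a_lt b_lt by auto
  have Exp: "E x p" and Exq: "E x q" using aJ bJ J_def p_def q_def by auto
  have only: "w = p \<or> w = q" if wW: "w \<in> W" and xw: "E x w" for w
  proof -
    obtain j where j: "j < n" "j \<le> \<alpha> \<or> \<beta> \<le> j" "w = hs!j" using wW W_def by auto
    hence "j \<in> J" using xw J_def by auto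
    hence "j = \<alpha> \<or> j = \<beta>" using aleq j(2) by fastforce
    thus ?thesis using j p_def q_def by auto
  qed
  have wk: "walk E hs" using cyc_walk[OF hs(1)] .
  have r1: "(rel W E)\<^sup>*\<^sup>* (hs!\<beta>) (hs!(n - 1))"
    by (rule reach_idx[OF wk]) (use b_lt n_def W_def in auto)
  have "hs!(n-1) \<in> W" unfolding W_def using b_lt n4 by (intro CollectI exI[of _ "n-1"]) auto
  moreover have "hs!0 \<in> W" unfolding W_def using n4 by (intro CollectI exI[of _ 0]) auto
  ultimately have r2: "rel W E (hs!(n-1)) (hs!0)"
    using cyc_wrap[OF hs(1)] n_def by (auto simp: rel_def)
  have r3: "(rel W E)\<^sup>*\<^sup>* (hs!0) (hs!\<alpha>)"
    by (rule reach_idx[OF wk]) (use a_lt n_def W_def in auto)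
  have r: "(rel W E)\<^sup>*\<^sup>* p q" using r1 r2 r3 p_def q_def
    by (meson rtranclp.rtrancl_into_rtrancl rtranclp_trans)
  obtain ys where ys: "ys \<noteq> []" "hd ys = p" "set ys \<subseteq> W" "is_hole V E (insert x (set ys))"
    using apex_hole[OF g x(1) xW WV pW qW pq npq Exp Exq only r] by blast
  have "p \<in> set hs0" using pW W_def hs(2) n_def by (auto intro: nth_mem)
  moreover have "p \<in> set ys" using ys(1,2) by auto
  ultimately show ?thesis using ys(4) by blast
qed

lemma ipath_adj: "ipath E ps \<Longrightarrow> i < length ps \<Longrightarrow> j < length ps \<Longrightarrow> E (ps!i) (ps!j) \<longleftrightarrow> (j = Suc i \<or> i = Suc j)"
  unfolding ipath_def by blast

lemma ipath_walk: "ipath E ys \<Longrightarrow> walk E ys"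
  unfolding ipath_def walk_def by auto

lemma caseII:
  assumes g: "graph V E" and c0: "cyc E hs0" and hV: "set hs0 \<subseteq> V"
    and ip: "ipath E ps" and pV: "set ps \<subseteq> V" and l4: "4 \<le> length ps"
    and u: "ps!0 \<in> set hs0" and v: "ps!(length ps - 1) \<in> set hs0"
    and i: "i < length ps" and xn: "ps!i \<notin> set hs0"
    and cl: "\<And>y z. y \<in> set hs0 \<Longrightarrow> z \<in> set hs0 \<Longrightarrow> E (ps!i) y \<Longrightarrow> E (ps!i) z \<Longrightarrow> y \<noteq> z \<Longrightarrow> E y z"
  shows "\<exists>C. is_hole V E C \<and> ps!i \<in> C \<and> C \<inter> set hs0 \<noteq> {}"
proof -
  have sym: "\<And>a b. E a b \<Longrightarrow> E b a" using graph_sym[OF g] .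
  define k where "k = length ps - 1"
  define x where "x = ps!i"
  have k3: "3 \<le> k" using l4 k_def by simp
  have kl: "k < length ps" using l4 k_def by simp
  have disp: "distinct ps" using ip ipath_def by blast
  have i0: "i \<noteq> 0" using u xn by (metis)
  have ik: "i \<noteq> k" using v xn k_def by auto
  have ik': "i < k" using i ik k_def by simp
  have Nx: "\<And>t. t < length ps \<Longrightarrow> E x (ps!t) \<longleftrightarrow> (t = Suc i \<or> i = Suc t)"
    using ipath_adj[OF ip] i x_def by blast
  obtain hs where hs: "cyc E hs" "set hs = set hs0" "hs!0 = ps!0" "length hs = length hs0"
    using rotate_to[OF c0 u] by blast
  define n where "n = length hs"
  have n4: "4 \<le> n" using hs(1) n_def cyc_def by blast
  have dis: "distinct hs" using hs(1) cyc_def by blast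
  obtain m where m: "m < n" "hs!m = ps!k" using v hs(2) n_def k_def by (metis in_set_conv_nth)
  have m0: "m \<noteq> 0" using m hs(3) disp kl k3 by (metis nth_eq_iff_index_eq not_numeral_le_zero less_trans zero_less_Suc gr0I)
  have p0: "0 < length ps" using kl by linarith
  have nuv: "\<not> E (ps!0) (ps!k)" using ipath_adj[OF ip, of 0 k] kl k3 p0 by auto
  have hne: "hs \<noteq> []" using m n_def len_ne by blast
  have "0 < n" using n4 by simp
  hence "E (hs!0) (hs!m) \<longleftrightarrow> cadj n 0 m" using cyc_adj[OF hs(1), of 0 m] m n_def by blast
  hence ncadj: "\<not> cadj n 0 m" using hs(3) m(2) nuv by simp
  have m1: "m \<noteq> 1" using ncadj n4 unfolding cadj_def by auto
  have mn: "m \<noteq> n - 1"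
  proof
    assume "m = n - 1"
    hence "Suc m mod n = 0" using n4 by simp
    thus False using ncadj unfolding cadj_def by simp
  qed
  have xhs: "x \<notin> set hs" using xn hs(2) x_def by simp
  have arcs: "(\<forall>j. 0 < j \<and> j < m \<longrightarrow> \<not> E x (hs!j)) \<or> (\<forall>j. m < j \<and> j < n \<longrightarrow> \<not> E x (hs!j))"
  proof (rule ccontr)
    assume "\<not> ?thesis"
    then obtain j1 j2 where j1: "0 < j1" "j1 < m" "E x (hs!j1)" and j2: "m < j2" "j2 < n" "E x (hs!j2)" by blast
    have jn: "j1 < length hs" "j2 < length hs" using j1 j2 m n_def by auto
    have "j1 \<noteq> j2" using j1 j2 by simp
    hence "hs!j1 \<noteq> hs!j2" using dis jn nth_eq_iff_index_eq by metis
    moreover have "hs!j1 \<in> set hs0" "hs!j2 \<in> set hs0" using jn hs(2) nth_mem by metis+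
    moreover have "E (ps!i) (hs!j1)" "E (ps!i) (hs!j2)" using j1(3) j2(3) x_def by simp_all
    ultimately have "E (hs!j1) (hs!j2)" using cl by blast
    hence ca: "cadj n j1 j2" using cyc_adj[OF hs(1)] jn n_def by blast
    have "Suc j1 mod n = Suc j1" using j1 m by simp
    moreover have "Suc j2 mod n \<noteq> j1"
    proof (cases "Suc j2 < n")
      case True then show ?thesis using j1 j2 by simp
    next
      case False hence "Suc j2 = n" using j2 by simp
      then show ?thesis using j1 by simp
    qed
    ultimately show False using ca j1(2) j2(1) unfolding cadj_def by simp
  qed
  have wk: "walk E hs" using cyc_walk[OF hs(1)] .
  have hs0m: "hs!j \<in> set hs0" if "j < n" for j using that hs(2) n_def nth_mem by metis
  obtain A where A: "A \<subseteq> set hs0" "ps!0 \<in> A" "ps!k \<in> A" "(rel A E)\<^sup>*\<^sup>* (ps!0) (ps!k)"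
     "\<And>w. w \<in> A \<Longrightarrow> E x w \<Longrightarrow> w = ps!0 \<or> w = ps!k"
  proof (cases "\<forall>j. 0 < j \<and> j < m \<longrightarrow> \<not> E x (hs!j)")
    case True
    define A where "A = {hs!j | j. j \<le> m}"
    have A1: "A \<subseteq> set hs0" unfolding A_def using hs0m m(1) by fastforce
    have A2: "ps!0 \<in> A" unfolding A_def using hs(3) by (intro CollectI exI[of _ 0]) simp
    have A3: "ps!k \<in> A" unfolding A_def using m(2) by (intro CollectI exI[of _ m]) simp
    have "(rel A E)\<^sup>*\<^sup>* (hs!0) (hs!m)"
      by (rule reach_idx[OF wk]) (use m n_def A_def in auto)
    hence A4: "(rel A E)\<^sup>*\<^sup>* (ps!0) (ps!k)" using hs(3) m(2) by simp
    have A5: "w = ps!0 \<or> w = ps!k" if wA: "w \<in> A" and xw: "E x w" for w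
    proof -
      obtain j where j: "j \<le> m" "w = hs!j" using wA A_def by auto
      have "\<not> (0 < j \<and> j < m)" using True xw j(2) by blast
      hence "j = 0 \<or> j = m" using j(1) by linarith
      thus ?thesis using j(2) hs(3) m(2) by auto
    qed
    show ?thesis by (rule that[OF A1 A2 A3 A4 A5])
  next
    case False
    hence F: "\<forall>j. m < j \<and> j < n \<longrightarrow> \<not> E x (hs!j)" using arcs by blast
    define A where "A = {hs!j | j. m \<le> j \<and> j < n} \<union> {hs!0}"
    have A1: "A \<subseteq> set hs0" unfolding A_def using hs0m n4 by fastforce
    have A2: "ps!0 \<in> A" unfolding A_def using hs(3) by simp
    have A3: "ps!k \<in> A" unfolding A_def using m by (intro UnI1 CollectI exI[of _ m]) simp
    have r1: "(rel A E)\<^sup>*\<^sup>* (hs!m) (hs!(n-1))"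
      by (rule reach_idx[OF wk]) (use m n_def A_def in auto)
    have "hs!(n-1) \<in> A" unfolding A_def using m n4 by (intro UnI1 CollectI exI[of _ "n-1"]) simp
    moreover have "hs!0 \<in> A" unfolding A_def by simp
    ultimately have "rel A E (hs!(n-1)) (hs!0)"
      using cyc_wrap[OF hs(1)] n_def unfolding rel_def by simp
    hence "(rel A E)\<^sup>*\<^sup>* (hs!m) (hs!0)" using r1 by (meson rtranclp.rtrancl_into_rtrancl)
    hence "(rel A E)\<^sup>*\<^sup>* (hs!0) (hs!m)" using reach_sym[of E A "hs!m" "hs!0"] graph_sym[OF g] by blast
    hence A4: "(rel A E)\<^sup>*\<^sup>* (ps!0) (ps!k)" using hs(3) m(2) by simp
    have A5: "w = ps!0 \<or> w = ps!k" if wA: "w \<in> A" and xw: "E x w" for w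
    proof -
      have "w = hs!0 \<or> (\<exists>j. m \<le> j \<and> j < n \<and> w = hs!j)" using wA A_def by blast
      then show ?thesis
      proof
        assume "w = hs!0" then show ?thesis using hs(3) by simp
      next
        assume "\<exists>j. m \<le> j \<and> j < n \<and> w = hs!j"
        then obtain j where j: "m \<le> j" "j < n" "w = hs!j" by blast
        have "\<not> (m < j \<and> j < n)" using F xw j(3) by blast
        hence "j = m" using j by linarith
        thus ?thesis using j(3) m(2) by simp
      qed
    qed
    show ?thesis by (rule that[OF A1 A2 A3 A4 A5])
  qed
  have wp: "walk E ps" using ipath_walk[OF ip] .
  define p where "p = ps!(i-1)"
  define q where "q = ps!(Suc i)"
  define PL where "PL = {ps!t | t. t < i}"
  define PR where "PR = {ps!t | t. i < t \<and> t < length ps}"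
  define W where "W = PL \<union> A \<union> PR"
  have si: "Suc i < length ps" using ik' kl by simp
  have im1: "i - 1 < i" "Suc (i - 1) = i" using i0 by auto
  have PLV: "PL \<subseteq> V" unfolding PL_def using pV i nth_mem by fastforce
  have PRV: "PR \<subseteq> V" unfolding PR_def using pV nth_mem by fastforce
  have WV: "W \<subseteq> V" unfolding W_def using PLV PRV A(1) hV by blast
  have xV: "x \<in> V" using pV i x_def nth_mem by blast
  have xW: "x \<notin> W"
  proof
    assume "x \<in> W"
    hence "x \<in> PL \<or> x \<in> A \<or> x \<in> PR" unfolding W_def by blast
    then show False
    proof (elim disjE)
      assume "x \<in> A" thus False using A(1) xn x_def by blast
    next
      assume "x \<in> PL"
      then obtain t where "t < i" "x = ps!t" unfolding PL_def by blast
      thus False using disp i x_def nth_eq_iff_index_eq by (metis less_irrefl less_trans)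
    next
      assume "x \<in> PR"
      then obtain t where "i < t" "t < length ps" "x = ps!t" unfolding PR_def by blast
      thus False using disp i x_def nth_eq_iff_index_eq by (metis less_irrefl)
    qed
  qed
  have pPL: "p \<in> PL" unfolding PL_def p_def using im1 by blast
  have qPR: "q \<in> PR" unfolding PR_def q_def using si by blast
  have pW: "p \<in> W" and qW: "q \<in> W" using pPL qPR W_def by auto
  have im1l: "i - 1 < length ps" using i by simp
  have pq: "p \<noteq> q" unfolding p_def q_def using disp im1l si nth_eq_iff_index_eq by (metis Suc_n_not_le_n diff_le_self)
  have npq: "\<not> E p q" unfolding p_def q_def using ipath_adj[OF ip im1l si] im1 by simp
  have Exp: "E x p" unfolding p_def using Nx[OF im1l] im1 by simp
  have Exq: "E x q" unfolding q_def using Nx[OF si] by simp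
  have only: "w = p \<or> w = q" if wW: "w \<in> W" and xw: "E x w" for w
  proof -
    have "w \<in> PL \<or> w \<in> A \<or> w \<in> PR" using wW unfolding W_def by blast
    then show ?thesis
    proof (elim disjE)
      assume "w \<in> PL"
      then obtain t where t: "t < i" "w = ps!t" unfolding PL_def by blast
      hence "t = Suc i \<or> i = Suc t" using Nx xw i by simp
      hence "t = i - 1" using t by auto
      thus ?thesis using t p_def by simp
    next
      assume "w \<in> PR"
      then obtain t where t: "i < t" "t < length ps" "w = ps!t" unfolding PR_def by blast
      hence "t = Suc i \<or> i = Suc t" using Nx xw by simp
      hence "t = Suc i" using t by auto
      thus ?thesis using t q_def by simp
    next
      assume wA: "w \<in> A"
      hence "w = ps!0 \<or> w = ps!k" using A(5) xw by blast
      then show ?thesis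
      proof
        assume w0: "w = ps!0"
        hence "0 = Suc i \<or> i = Suc 0" using Nx[OF p0] xw by simp
        hence "i - 1 = 0" by simp
        thus ?thesis using w0 p_def by simp
      next
        assume wk': "w = ps!k"
        hence "k = Suc i \<or> i = Suc k" using Nx[OF kl] xw by simp
        hence "k = Suc i" using ik' by simp
        thus ?thesis using wk' q_def by simp
      qed
    qed
  qed
  have r1: "(rel W E)\<^sup>*\<^sup>* (ps!0) (ps!(i-1))"
  proof (rule reach_idx[OF wp im1l])
    show "0 \<le> i - 1" by simp
    fix j assume "0 \<le> j" "j \<le> i - 1"
    hence "j < i" using i0 by linarith
    hence "ps!j \<in> PL" unfolding PL_def by blast
    thus "ps!j \<in> W" unfolding W_def by blast
  qed
  have r1': "(rel W E)\<^sup>*\<^sup>* p (ps!0)" unfolding p_def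
    using reach_sym[of E W "ps!0" "ps!(i-1)"] graph_sym[OF g] r1 by blast
  have AW: "A \<subseteq> W" unfolding W_def by blast
  have r2: "(rel W E)\<^sup>*\<^sup>* (ps!0) (ps!k)" using reach_mono[OF A(4) AW] .
  have r3: "(rel W E)\<^sup>*\<^sup>* (ps!(Suc i)) (ps!k)"
  proof (rule reach_idx[OF wp kl])
    show "Suc i \<le> k" using ik' by simp
    fix j assume "Suc i \<le> j" "j \<le> k"
    hence "i < j" "j < length ps" using kl by linarith+
    hence "ps!j \<in> PR" unfolding PR_def by blast
    thus "ps!j \<in> W" unfolding W_def by blast
  qed
  have r3': "(rel W E)\<^sup>*\<^sup>* (ps!k) q" unfolding q_def
    using reach_sym[of E W "ps!(Suc i)" "ps!k"] graph_sym[OF g] r3 by blast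
  have r: "(rel W E)\<^sup>*\<^sup>* p q" using r1' r2 r3' by (meson rtranclp_trans)
  obtain ys where ys: "ipath E ys" "ys \<noteq> []" "hd ys = p" "last ys = q" "set ys \<subseteq> W"
      "is_hole V E (insert x (set ys))"
    using apex_hole[OF g xV xW WV pW qW pq npq Exp Exq only r] by blast
  have meet: "set ys \<inter> set hs0 \<noteq> {}"
  proof
    assume dj: "set ys \<inter> set hs0 = {}"
    have inPL: "ys!t \<in> PL" if "t < length ys" for t
      using that
    proof (induction t)
      case 0 then show ?case using ys(2,3) pPL by (simp add: hd_conv_nth)
    next
      case (Suc t)
      have yW: "ys!Suc t \<in> W" using ys(5) Suc.prems nth_mem by blast
      have "ys!Suc t \<notin> A" using dj A(1) Suc.prems nth_mem by blast
      hence c: "ys!Suc t \<in> PL \<or> ys!Suc t \<in> PR" using yW W_def by blast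
      have "ys!t \<in> PL" using Suc by simp
      then obtain a where a: "a < i" "ys!t = ps!a" unfolding PL_def by blast
      have e: "E (ys!t) (ys!Suc t)" using ipath_adj[OF ys(1)] Suc.prems by simp
      show ?case
      proof (rule ccontr)
        assume "ys!Suc t \<notin> PL"
        hence "ys!Suc t \<in> PR" using c by blast
        then obtain b where b: "i < b" "b < length ps" "ys!Suc t = ps!b" unfolding PR_def by blast
        have "E (ps!a) (ps!b)" using e a b by simp
        hence "b = Suc a \<or> a = Suc b" using ipath_adj[OF ip] a b i by simp
        thus False using a b by auto
      qed
    qed
    have "length ys - 1 < length ys" using ys(2) by simp
    hence "last ys \<in> PL" using inPL ys(2) by (simp add: last_conv_nth)
    then obtain a where a: "a < i" "q = ps!a" using ys(4) unfolding PL_def by blast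
    thus False using q_def disp si i nth_eq_iff_index_eq by (metis Suc_lessD less_not_refl2 less_trans)
  qed
  show ?thesis using ys(6) meet x_def by blast
qed

lemma path_of_cyc:
  assumes c: "cyc (add_edge E u v) ps" and sym: "\<And>a b. E a b \<Longrightarrow> E b a" and nuv: "\<not> E u v"
    and ends: "(ps!0 = u \<and> ps!(length ps - 1) = v) \<or> (ps!0 = v \<and> ps!(length ps - 1) = u)"
  shows "ipath E ps"
proof -
  define n where "n = length ps"
  have n4: "4 \<le> n" using c cyc_def n_def by blast
  have dis: "distinct ps" using c cyc_def by blast
  have G: "add_edge E u v (ps!i) (ps!j) \<longleftrightarrow> cadj n i j" if "i < n" "j < n" for i j
    using c that n_def unfolding cyc_def by blast
  have uv: "\<not> E u v" "\<not> E v u" using nuv sym by blast+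
  have ends01: "{ps!i, ps!j} = {u, v} \<Longrightarrow> i < n \<Longrightarrow> j < n \<Longrightarrow> {i, j} = {0, n - 1}" for i j
  proof -
    assume a: "{ps!i, ps!j} = {u, v}" "i < n" "j < n"
    have n1: "n - 1 < n" "0 < n" using n4 by auto
    have "{ps!i, ps!j} = {ps!0, ps!(n-1)}" using a ends n_def by auto
    hence "(ps!i = ps!0 \<and> ps!j = ps!(n-1)) \<or> (ps!i = ps!(n-1) \<and> ps!j = ps!0)" by (auto simp: doubleton_eq_iff)
    moreover have "ps!i = ps!0 \<Longrightarrow> i = 0" using dis a(2) n1 n_def nth_eq_iff_index_eq by blast
    moreover have "ps!j = ps!0 \<Longrightarrow> j = 0" using dis a(3) n1 n_def nth_eq_iff_index_eq by blast
    moreover have "ps!i = ps!(n-1) \<Longrightarrow> i = n-1" using dis a(2) n1 n_def nth_eq_iff_index_eq by blast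
    moreover have "ps!j = ps!(n-1) \<Longrightarrow> j = n-1" using dis a(3) n1 n_def nth_eq_iff_index_eq by blast
    ultimately have "(i = 0 \<and> j = n - 1) \<or> (i = n - 1 \<and> j = 0)" by blast
    thus "{i, j} = {0, n - 1}" by (metis insert_commute)
  qed
  have "E (ps!i) (ps!j) \<longleftrightarrow> (j = Suc i \<or> i = Suc j)" if ij: "i < n" "j < n" for i j
  proof
    assume e: "E (ps!i) (ps!j)"
    hence "cadj n i j" using G[OF ij] unfolding add_edge_def by simp
    show "j = Suc i \<or> i = Suc j"
    proof (rule ccontr)
      assume nc: "\<not> (j = Suc i \<or> i = Suc j)"
      have "(i = n - 1 \<and> j = 0) \<or> (j = n - 1 \<and> i = 0)"
      proof -
        have "j = Suc i mod n \<or> i = Suc j mod n" using \<open>cadj n i j\<close> unfolding cadj_def .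
        thus ?thesis
        proof
          assume a: "j = Suc i mod n"
          show ?thesis
          proof (cases "Suc i < n")
            case True thus ?thesis using a nc by simp
          next
            case False hence "Suc i = n" using ij by simp
            thus ?thesis using a by auto
          qed
        next
          assume a: "i = Suc j mod n"
          show ?thesis
          proof (cases "Suc j < n")
            case True thus ?thesis using a nc by simp
          next
            case False hence "Suc j = n" using ij by simp
            thus ?thesis using a by auto
          qed
        qed
      qed
      hence "(ps!i = u \<and> ps!j = v) \<or> (ps!i = v \<and> ps!j = u)" using ends n_def by blast
      hence "E u v \<or> E v u" using e by blast
      thus False using uv by blast
    qed
  next
    assume cons: "j = Suc i \<or> i = Suc j"
    hence "cadj n i j"
    proof
      assume "j = Suc i" thus "cadj n i j" using ij unfolding cadj_def by simp
    next
      assume "i = Suc j" thus "cadj n i j" using ij unfolding cadj_def by simp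
    qed
    hence g: "add_edge E u v (ps!i) (ps!j)" using G[OF ij] by simp
    show "E (ps!i) (ps!j)"
    proof (rule ccontr)
      assume "\<not> E (ps!i) (ps!j)"
      hence "(ps!i = u \<and> ps!j = v) \<or> (ps!i = v \<and> ps!j = u)" using g unfolding add_edge_def by blast
      hence "{ps!i, ps!j} = {u, v}" unfolding doubleton_eq_iff by blast
      hence "{i, j} = {0, n - 1}" by (rule ends01[OF _ ij(1) ij(2)])
      hence "(i = 0 \<and> j = n - 1) \<or> (i = n - 1 \<and> j = 0)" unfolding doubleton_eq_iff by blast
      thus False using cons n4 by linarith
    qed
  qed
  hence "\<forall>i<length ps. \<forall>j<length ps. E (ps!i) (ps!j) \<longleftrightarrow> (j = Suc i \<or> i = Suc j)" unfolding n_def by blast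
  thus ?thesis unfolding ipath_def using dis by blast
qed

lemma get_path:
  assumes c: "cyc (add_edge E u v) xs" and uv: "u \<in> set xs" "v \<in> set xs" "u \<noteq> v" and nuv: "\<not> E u v"
    and sym: "\<And>a b. E a b \<Longrightarrow> E b a"
  shows "\<exists>ps. ipath E ps \<and> set ps = set xs \<and> length ps = length xs \<and>
     ((ps!0 = u \<and> ps!(length ps - 1) = v) \<or> (ps!0 = v \<and> ps!(length ps - 1) = u))"
proof -
  define n where "n = length xs"
  have n4: "4 \<le> n" using c cyc_def n_def by blast
  obtain a where a: "a < n" "xs!a = u" using uv(1) n_def by (metis in_set_conv_nth)
  obtain b where b: "b < n" "xs!b = v" using uv(2) n_def by (metis in_set_conv_nth)
  have "add_edge E u v u v" unfolding add_edge_def by simp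
  hence ca: "cadj n a b" using c a b n_def unfolding cyc_def by metis
  have rot: "\<exists>ps. ipath E ps \<and> set ps = set xs \<and> length ps = length xs \<and>
     ps!0 = xs!r \<and> ps!(length ps - 1) = xs!s" if rs: "r < n" "s < n" "r = Suc s mod n"
     and ends: "(xs!r = u \<and> xs!s = v) \<or> (xs!r = v \<and> xs!s = u)" for r s
  proof -
    define ps where "ps = rotate r xs"
    have lp: "length ps = n" using ps_def n_def by simp
    have "0 < length xs" using rs n_def by linarith
    hence "rotate r xs ! 0 = xs ! ((r + 0) mod length xs)" by (rule nth_rotate)
    hence p0: "ps!0 = xs!r" using ps_def rs n_def by simp
    have md: "(r + (n - 1)) mod n = s"
    proof (cases "Suc s < n")
      case True
      hence "r = Suc s" using rs by simp
      hence "r + (n - 1) = s + n" using n4 by simp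
      thus ?thesis using rs(2) by simp
    next
      case False
      hence "Suc s = n" using rs by simp
      hence "r = 0" using rs by simp
      thus ?thesis using \<open>Suc s = n\<close> by simp
    qed
    have nm: "n - 1 < length xs" using n4 n_def by linarith
    have rr: "rotate r xs ! (n - 1) = xs ! ((r + (n - 1)) mod length xs)" using nm by (rule nth_rotate)
    have pl: "ps!(length ps - 1) = xs!s" using rr md ps_def lp n_def by simp
    have cp: "cyc (add_edge E u v) ps" using cyc_rotate[OF c] ps_def by simp
    have en: "(ps!0 = u \<and> ps!(length ps - 1) = v) \<or> (ps!0 = v \<and> ps!(length ps - 1) = u)"
      using p0 pl ends by simp
    have "ipath E ps" by (rule path_of_cyc[OF cp sym nuv en])
    moreover have "set ps = set xs" "length ps = length xs" using ps_def by simp_all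
    ultimately show ?thesis using p0 pl by blast
  qed
  from ca have "b = Suc a mod n \<or> a = Suc b mod n" unfolding cadj_def .
  thus ?thesis
  proof
    assume "b = Suc a mod n"
    from rot[OF b(1) a(1) this] a b show ?thesis by auto
  next
    assume "a = Suc b mod n"
    from rot[OF a(1) b(1) this] a b show ?thesis by auto
  qed
qed

lemma class_of_hole:
  assumes H: "H \<in> holes V E" and C: "is_hole V E C" and xC: "x \<in> C" and hC: "h \<in> C" "h \<in> H"
  shows "x \<in> hole_class V E H"
proof (cases "C = H")
  case True
  have "hole_rel V E x x" unfolding hole_rel_def using H xC True by (intro exI[of _ "[H]"]) auto
  then show ?thesis unfolding hole_class_def using xC True by blast
next
  case False
  have "hole_rel V E h x" unfolding hole_rel_def
  proof (intro exI[of _ "[H, C]"] conjI)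
    show "distinct [H, C]" using False by simp
    show "set [H, C] \<subseteq> holes V E" using H C unfolding holes_def by simp
    show "\<forall>i. Suc i < length [H, C] \<longrightarrow> [H, C] ! i \<inter> [H, C] ! Suc i \<noteq> {}"
      using hC by auto
  qed (use hC xC in auto)
  then show ?thesis unfolding hole_class_def using hC by blast
qed

theorem proposition4p6:
  fixes V :: "'a set" and E :: "'a \<Rightarrow> 'a \<Rightarrow> bool" and H Hs :: "'a set" and u v :: 'a
  assumes "graph V E"
    and "\<not> chordal V E"
    and "H \<in> holes V E"
    and "u \<in> H" and "v \<in> H" and "u \<noteq> v" and "\<not> E u v"
    and "Hs \<in> holes V (add_edge E u v)"
    and "Hs \<notin> holes V E"
  shows "Hs \<subseteq> hole_class V E H"
proof
  note g = assms(1)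
  have sym: "\<And>a b. E a b \<Longrightarrow> E b a" using graph_sym[OF g] .
  obtain hs0 where hs0: "cyc E hs0" "set hs0 = H" and HV: "H \<subseteq> V"
    using assms(3) unfolding holes_def is_hole_cyc by blast
  obtain xs where xs: "cyc (add_edge E u v) xs" "set xs = Hs" and HsV: "Hs \<subseteq> V"
    using assms(8) unfolding holes_def is_hole_cyc by blast
  have uvin: "u \<in> Hs \<and> v \<in> Hs"
  proof (rule ccontr)
    assume nin: "\<not> (u \<in> Hs \<and> v \<in> Hs)"
    have "add_edge E u v a b = E a b" if "a \<in> set xs" "b \<in> set xs" for a b
      using nin that xs(2) unfolding add_edge_def by blast
    hence "cyc E xs" using xs(1) cyc_cong[of xs "add_edge E u v" E] by blast
    hence "Hs \<in> holes V E" using HsV xs(2) unfolding holes_def is_hole_cyc by blast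
    thus False using assms(9) by contradiction
  qed
  obtain ps where ps: "ipath E ps" "set ps = Hs" "length ps = length xs"
      "(ps!0 = u \<and> ps!(length ps - 1) = v) \<or> (ps!0 = v \<and> ps!(length ps - 1) = u)"
    using get_path[OF xs(1) _ _ assms(6,7) sym] uvin xs(2) by blast
  have l4: "4 \<le> length ps" using xs(1) ps(3) cyc_def by metis
  have e0: "ps!0 \<in> set hs0" and e1: "ps!(length ps - 1) \<in> set hs0" using ps(4) assms(4,5) hs0(2) by auto
  fix x assume "x \<in> Hs"
  then obtain i where i: "i < length ps" "ps!i = x" using ps(2) by (metis in_set_conv_nth)
  show "x \<in> hole_class V E H"
  proof (cases "x \<in> H")
    case True
    have "is_hole V E H" using assms(3) unfolding holes_def by simp
    then show ?thesis using class_of_hole[OF assms(3) _ True True True] by blast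
  next
    case xH: False
    have xV: "x \<in> V" using \<open>x \<in> Hs\<close> HsV by blast
    have xn: "ps!i \<notin> set hs0" using xH i hs0(2) by simp
    have "\<exists>C. is_hole V E C \<and> ps!i \<in> C \<and> C \<inter> set hs0 \<noteq> {}"
    proof (cases "\<exists>y z. y \<in> set hs0 \<and> z \<in> set hs0 \<and> E x y \<and> E x z \<and> y \<noteq> z \<and> \<not> E y z")
      case True
      then obtain y z where yz: "y \<in> set hs0" "z \<in> set hs0" "E x y" "E x z" "y \<noteq> z" "\<not> E y z" by blast
      define k where "k = length ps - 1"
      have kl: "k < length ps" "3 \<le> k" "0 < length ps" using l4 k_def by auto
      have "\<not> (E x (ps!0) \<and> E x (ps!k))"
      proof
        assume a: "E x (ps!0) \<and> E x (ps!k)"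
        hence "0 = Suc i \<or> i = Suc 0" using ipath_adj[OF ps(1) i(1) kl(3)] i(2) by simp
        moreover have "k = Suc i \<or> i = Suc k" using a ipath_adj[OF ps(1) i(1) kl(1)] i(2) by simp
        ultimately show False using kl i(1) by linarith
      qed
      then obtain c where c: "c \<in> set hs0" "\<not> E x c" using e0 e1 k_def by blast
      have hV0: "set hs0 \<subseteq> V" using HV hs0(2) by simp
      have xn': "x \<notin> set hs0" using xn i by simp
      from caseI[OF g hs0(1) hV0 xV xn' yz c] show ?thesis using i by simp
    next
      case False
      have hV0: "set hs0 \<subseteq> V" using HV hs0(2) by simp
      have cl: "\<And>y z. y \<in> set hs0 \<Longrightarrow> z \<in> set hs0 \<Longrightarrow> E (ps!i) y \<Longrightarrow> E (ps!i) z \<Longrightarrow> y \<noteq> z \<Longrightarrow> E y z"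
        using False i(2) by blast
      have pV: "set ps \<subseteq> V" using ps(2) HsV by simp
      show ?thesis by (rule caseII[OF g hs0(1) hV0 ps(1) pV l4 e0 e1 i(1) xn cl])
    qed
    then obtain C where C: "is_hole V E C" "x \<in> C" "C \<inter> H \<noteq> {}" using i hs0(2) by blast
    then obtain h where "h \<in> C" "h \<in> H" by blast
    then show ?thesis using class_of_hole[OF assms(3) C(1) C(2)] by blast
  qed
qed

end
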